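(* There is a constant $C_1>0$ (one may take $C_1=2^{-8}$) such that for every even integer $N\ge2$ and ${\cal R}=[0,N]^3$, we have $|\operatorname{TTw}[{\cal R}]|\le C_1N^{12}$.
   Context: Unit cubes are $[x,x+1]\times[y,y+1]\times[z,z+1]$, $(x,y,z)\in\mathbb{Z}^3$. A slab is a $2\times2\times1$ box (any orientation) of four unit cubes, and a domino is two unit cubes sharing a face. Color the cube with corner $(x,y,z)$ by $(y+z,x+z)\in(\mathbb{Z}/2)^2$. For a view axis $a\in\{x,y,z\}$, a good pair $\kappa$ for $a$ is the set of cubes on which the sum of the two coordinates perpendicular to $a$ has a fixed parity, so each axis has two complementary good pairs. Transformation (for $a=z$; other axes by permuting coordinates): delete cubes not in $\kappa$, and inflate each cube $[x,x+1]\times[y,y+1]\times[z,z+1]$ of $\kappa$ to $\tilde S\times[z,z+1]$, where $\tilde S$ has vertices $(x-\frac12,y+\frac12),(x+\frac12,y-\frac12),(x+\frac32,y+\frac12),(x+\frac12,y+\frac32)$. After rotation and rescaling this is a cubiculated region. Each slab contains two cubes of $\kappa$ and becomes the domino of their inflations, giving a domino tiling $\tilde{\mathbf t}_\kappa$. Twist of a domino tiling (floors $z\in[n,n+1]$, vertical means parallel to the $z$-axis): for an ordered pair $(d_0,d_1)$ with $d_0$ horizontal parallel to the $y$-axis and $d_1$ vertical, $d_1$ affects $d_0$ if $d_1$ has a cube on $d_0$'s floor and their interiors' projections onto the plane $x=0$ intersect. The effect is then $\pm1$, fixed by four binary parameters (side $\pm x$; which cube of $d_0$ is aligned with $d_1$;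 parity of the $x$-distance; whether the lower cube of $d_1$ is on $d_0$'s floor or below), each flipping the sign, with a fixed normalization. Otherwise the effect is $0$. $\operatorname{Tw}=\frac14\sum$ effects, and $\operatorname{Tw}_\kappa({\mathbf t})=\operatorname{Tw}(\tilde{\mathbf t}_\kappa)$. For fixed good pairs $\kappa_x,\kappa_y,\kappa_z$ for the three axes, the triple twist of a slab tiling ${\mathbf t}$ of a box is $\operatorname{TTw}({\mathbf t})=(\operatorname{Tw}_{\kappa_x}({\mathbf t}),\operatorname{Tw}_{\kappa_y}({\mathbf t}),\operatorname{Tw}_{\kappa_z}({\mathbf t}))\in\mathbb{Z}^3$. Also $\operatorname{TTw}[{\cal R}]=\{\operatorname{TTw}({\mathbf t}):{\mathbf t}$ a slab tiling of ${\cal R}\}$. *)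

theory Defs
  imports Complex_Main
begin

type_synonym cube = "int \<times> int \<times> int"
  \<comment> \<open>the unit cube [x,x+1]x[y,y+1]x[z,z+1] is represented by its corner (x,y,z)\<close>

definition box_cubes :: "int \<Rightarrow> cube set" where
  "box_cubes N = {0..<N} \<times> {0..<N} \<times> {0..<N}"

definition is_slab :: "cube set \<Rightarrow> bool" where
  "is_slab s \<longleftrightarrow> (\<exists>x y z.
      s = {(x,y,z),(x+1,y,z),(x,y+1,z),(x+1,y+1,z)} \<or>
      s = {(x,y,z),(x+1,y,z),(x,y,z+1),(x+1,y,z+1)} \<or>
      s = {(x,y,z),(x,y+1,z),(x,y,z+1),(x,y+1,z+1)})"

definition slab_tiling :: "cube set \<Rightarrow> cube set set \<Rightarrow> bool" where
  "slab_tiling R T \<longleftrightarrow> (\<forall>s\<in>T. is_slab s) \<and>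
     (\<forall>s\<in>T. \<forall>s'\<in>T. s \<noteq> s' \<longrightarrow> s \<inter> s' = {}) \<and> \<Union>T = R"

text \<open>Effect of a vertical domino with lower cube b on a horizontal domino parallel
  to the y-axis with first (smaller y) cube a.\<close>
definition effect :: "cube \<Rightarrow> cube \<Rightarrow> real" where
  "effect a b = (case a of (x,y,z) \<Rightarrow> case b of (x',y',z') \<Rightarrow>
     if (y' = y \<or> y' = y + 1) \<and> (z' = z \<or> z' = z - 1) then
        (if x' < x then -1 else 1) * (if y' = y + 1 then -1 else 1)
        * (if odd (x' - x) then 1 else -1) * (if z' = z - 1 then -1 else 1)
     else 0)"

definition twist :: "cube set set \<Rightarrow> real" where
  "twist D = (1/4) * (\<Sum>(a,b) \<in> {(a,b). (case a of (x,y,z) \<Rightarrow> {(x,y,z),(x,y+1,z)} \<in> D) \<and>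
                                    (case b of (x,y,z) \<Rightarrow> {(x,y,z),(x,y,z+1)} \<in> D)}.
                     effect a b)"

text \<open>Axes: 0 = x, 1 = y, 2 = z. The coordinate permutation moving the view axis to the
  third position (cyclic, i.e. a rotation).\<close>
definition axis_perm :: "nat \<Rightarrow> cube \<Rightarrow> cube" where
  "axis_perm a c = (case c of (x,y,z) \<Rightarrow>
     if a = 0 then (y,z,x) else if a = 1 then (z,x,y) else (x,y,z))"

definition kappa_z :: "int \<Rightarrow> cube set" where
  "kappa_z p = {(x,y,z). (x + y) mod 2 = p}"

text \<open>Inflation followed by rotation by 45 degrees and rescaling: the tilted square with
  centre (x+1/2,y+1/2) becomes the unit square with corner ((x-y-p)/2,(x+y-p)/2).\<close>
definition inflate_z :: "int \<Rightarrow> cube \<Rightarrow> cube" where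
  "inflate_z p c = (case c of (x,y,z) \<Rightarrow> ((x - y - p) div 2, (x + y - p) div 2, z))"

definition transform :: "nat \<Rightarrow> int \<Rightarrow> cube set set \<Rightarrow> cube set set" where
  "transform a p T = (\<lambda>s. inflate_z p ` (axis_perm a ` s \<inter> kappa_z p)) ` T"

definition Tw_kappa :: "nat \<Rightarrow> int \<Rightarrow> cube set set \<Rightarrow> real" where
  "Tw_kappa a p T = twist (transform a p T)"

definition TTw :: "int \<Rightarrow> int \<Rightarrow> int \<Rightarrow> cube set set \<Rightarrow> real \<times> real \<times> real" where
  "TTw px py pz T = (Tw_kappa 0 px T, Tw_kappa 1 py T, Tw_kappa 2 pz T)"

definition TTw_set :: "int \<Rightarrow> int \<Rightarrow> int \<Rightarrow> cube set \<Rightarrow> (real \<times> real \<times> real) set" where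
  "TTw_set px py pz R = {TTw px py pz T | T. slab_tiling R T}"

end

theory Submission
  imports Defs
begin


lemma slab_intro1: "s = {(x,y,z),(x+1,y,z),(x,y+1,z),(x+1,y+1,z)} \<Longrightarrow> is_slab s"
  unfolding is_slab_def by blast
lemma slab_intro2: "s = {(x,y,z),(x+1,y,z),(x,y,z+1),(x+1,y,z+1)} \<Longrightarrow> is_slab s"
  unfolding is_slab_def by blast
lemma slab_intro3: "s = {(x,y,z),(x,y+1,z),(x,y,z+1),(x,y+1,z+1)} \<Longrightarrow> is_slab s"
  unfolding is_slab_def by blast

lemma perm_slab:
  assumes "is_slab s" shows "is_slab (axis_perm a ` s)"
proof -
  obtain x y z where s: "s = {(x,y,z),(x+1,y,z),(x,y+1,z),(x+1,y+1,z)} \<or>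
      s = {(x,y,z),(x+1,y,z),(x,y,z+1),(x+1,y,z+1)} \<or>
      s = {(x,y,z),(x,y+1,z),(x,y,z+1),(x,y+1,z+1)}" using assms unfolding is_slab_def by blast
  consider "a = 0" | "a = 1" | "a \<noteq> 0 \<and> a \<noteq> 1" by blast
  then show ?thesis
  proof cases
    case 1
    then show ?thesis using s
      apply (elim disjE)
        apply (rule slab_intro2[of _ y z x], auto simp: axis_perm_def)
       apply (rule slab_intro3[of _ y z x], auto simp: axis_perm_def)
      apply (rule slab_intro1[of _ y z x], auto simp: axis_perm_def)
      done
  next
    case 2
    then show ?thesis using s
      apply (elim disjE)
        apply (rule slab_intro3[of _ z x y], auto simp: axis_perm_def)
       apply (rule slab_intro1[of _ z x y], auto simp: axis_perm_def)
      apply (rule slab_intro2[of _ z x y], auto simp: axis_perm_def)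
      done
  next
    case 3
    then show ?thesis using s
      apply (elim disjE)
        apply (rule slab_intro1[of _ x y z], auto simp: axis_perm_def)
       apply (rule slab_intro2[of _ x y z], auto simp: axis_perm_def)
      apply (rule slab_intro3[of _ x y z], auto simp: axis_perm_def)
      done
  qed
qed



definition xdom :: "cube \<Rightarrow> cube set" where
  "xdom c = (case c of (x,y,z) \<Rightarrow> {(x,y,z),(x+1,y,z)})"
definition ydom :: "cube \<Rightarrow> cube set" where
  "ydom c = (case c of (x,y,z) \<Rightarrow> {(x,y,z),(x,y+1,z)})"
definition vdom :: "cube \<Rightarrow> cube set" where
  "vdom c = (case c of (x,y,z) \<Rightarrow> {(x,y,z),(x,y,z+1)})"

definition isdom :: "cube set \<Rightarrow> bool" where
  "isdom d \<longleftrightarrow> (\<exists>c. d = xdom c \<or> d = ydom c \<or> d = vdom c)"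

lemma img2: "inflate_z p ` {a,b} = {inflate_z p a, inflate_z p b}" by simp

lemma shape1:
  assumes p: "p \<in> {0,1}"
  shows "isdom (inflate_z p ` ({(x,y,z),(x+1,y,z),(x,y+1,z),(x+1,y+1,z)} \<inter> kappa_z p))"
proof (cases "(x+y) mod 2 = p")
  case True
  have "{(x,y,z),(x+1,y,z),(x,y+1,z),(x+1,y+1,z)} \<inter> kappa_z p = {(x,y,z),(x+1,y+1,z)}"
    using True p by (auto simp: kappa_z_def; presburger)
  moreover have "inflate_z p ` {(x,y,z),(x+1,y+1,z)} = ydom ((x-y-p) div 2, (x+y-p) div 2, z)"
  proof -
    have "(x + 1 + (y + 1) - p) div 2 = (x+y-p) div 2 + 1" by presburger
    then show ?thesis unfolding img2 ydom_def inflate_z_def by (simp add: algebra_simps)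
  qed
  ultimately show ?thesis unfolding isdom_def by metis
next
  case False
  have "{(x,y,z),(x+1,y,z),(x,y+1,z),(x+1,y+1,z)} \<inter> kappa_z p = {(x,y+1,z),(x+1,y,z)}"
    using False p by (auto simp: kappa_z_def; presburger)
  moreover have "inflate_z p ` {(x,y+1,z),(x+1,y,z)} = xdom ((x-y-1-p) div 2, (x+y+1-p) div 2, z)"
  proof -
    have "(x + 1 - y - p) div 2 = (x-y-1-p) div 2 + 1" by presburger
    then show ?thesis unfolding img2 xdom_def inflate_z_def by (auto simp add: algebra_simps)
  qed
  ultimately show ?thesis unfolding isdom_def by metis
qed

lemma shape2:
  assumes p: "p \<in> {0,1}"
  shows "isdom (inflate_z p ` ({(x,y,z),(x+1,y,z),(x,y,z+1),(x+1,y,z+1)} \<inter> kappa_z p))"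
proof (cases "(x+y) mod 2 = p")
  case True
  have "{(x,y,z),(x+1,y,z),(x,y,z+1),(x+1,y,z+1)} \<inter> kappa_z p = {(x,y,z),(x,y,z+1)}"
    using True p by (auto simp: kappa_z_def; presburger)
  moreover have "inflate_z p ` {(x,y,z),(x,y,z+1)} = vdom ((x-y-p) div 2, (x+y-p) div 2, z)"
    unfolding img2 vdom_def inflate_z_def by simp
  ultimately show ?thesis unfolding isdom_def by metis
next
  case False
  have "{(x,y,z),(x+1,y,z),(x,y,z+1),(x+1,y,z+1)} \<inter> kappa_z p = {(x+1,y,z),(x+1,y,z+1)}"
    using False p by (auto simp: kappa_z_def; presburger)
  moreover have "inflate_z p ` {(x+1,y,z),(x+1,y,z+1)} = vdom ((x+1-y-p) div 2, (x+1+y-p) div 2, z)"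
    unfolding img2 vdom_def inflate_z_def by (simp add: algebra_simps)
  ultimately show ?thesis unfolding isdom_def by metis
qed

lemma shape3:
  assumes p: "p \<in> {0,1}"
  shows "isdom (inflate_z p ` ({(x,y,z),(x,y+1,z),(x,y,z+1),(x,y+1,z+1)} \<inter> kappa_z p))"
proof (cases "(x+y) mod 2 = p")
  case True
  have "{(x,y,z),(x,y+1,z),(x,y,z+1),(x,y+1,z+1)} \<inter> kappa_z p = {(x,y,z),(x,y,z+1)}"
    using True p by (auto simp: kappa_z_def; presburger)
  moreover have "inflate_z p ` {(x,y,z),(x,y,z+1)} = vdom ((x-y-p) div 2, (x+y-p) div 2, z)"
    unfolding img2 vdom_def inflate_z_def by simp
  ultimately show ?thesis unfolding isdom_def by metis
next
  case False
  have "{(x,y,z),(x,y+1,z),(x,y,z+1),(x,y+1,z+1)} \<inter> kappa_z p = {(x,y+1,z),(x,y+1,z+1)}"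
    using False p by (auto simp: kappa_z_def; presburger)
  moreover have "inflate_z p ` {(x,y+1,z),(x,y+1,z+1)} = vdom ((x-(y+1)-p) div 2, (x+(y+1)-p) div 2, z)"
    unfolding img2 vdom_def inflate_z_def by (simp add: algebra_simps)
  ultimately show ?thesis unfolding isdom_def by metis
qed

lemma shape:
  assumes "is_slab s" "p \<in> {0,1}"
  shows "isdom (inflate_z p ` (s \<inter> kappa_z p))"
  using assms shape1 shape2 shape3 unfolding is_slab_def by metis



definition RegN :: "int \<Rightarrow> int \<Rightarrow> cube set" where
  "RegN N p = {(u,v,w). 0 \<le> u+v+p \<and> u+v+p < N \<and> 0 \<le> v-u \<and> v-u < N \<and> 0 \<le> w \<and> w < N}"

lemma perm_box: "axis_perm a ` box_cubes N = box_cubes N"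
proof
  show "axis_perm a ` box_cubes N \<subseteq> box_cubes N"
    by (auto simp: axis_perm_def box_cubes_def split: if_splits)
  show "box_cubes N \<subseteq> axis_perm a ` box_cubes N"
  proof
    fix c assume c: "c \<in> box_cubes N"
    obtain x y z where cx: "c = (x,y,z)" by (cases c) auto
    consider "a = 0" | "a = 1" | "a \<noteq> 0 \<and> a \<noteq> 1" by blast
    then show "c \<in> axis_perm a ` box_cubes N"
    proof cases
      case 1 then show ?thesis using c cx
        by (intro rev_image_eqI[of "(z,x,y)"]) (auto simp: axis_perm_def box_cubes_def)
    next
      case 2 then show ?thesis using c cx
        by (intro rev_image_eqI[of "(y,z,x)"]) (auto simp: axis_perm_def box_cubes_def)
    next
      case 3 then show ?thesis using c cx
        by (intro rev_image_eqI[of "(x,y,z)"]) (auto simp: axis_perm_def box_cubes_def)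
    qed
  qed
qed

lemma inj_perm: "inj (axis_perm a)"
  unfolding inj_def axis_perm_def by auto

lemma evdiv: assumes "(x+y) mod 2 = (p::int)"
  shows "x - y - p = 2*((x-y-p) div 2)" "x + y - p = 2*((x+y-p) div 2)"
proof -
  have "(x - y - p) mod 2 = 0" using assms by presburger
  then show "x - y - p = 2*((x-y-p) div 2)" by presburger
  have "(x + y - p) mod 2 = 0" using assms by presburger
  then show "x + y - p = 2*((x+y-p) div 2)" by presburger
qed

lemma inj_infl: "inj_on (inflate_z p) (kappa_z p)"
proof (rule inj_onI)
  fix c c' assume c: "c \<in> kappa_z p" and c': "c' \<in> kappa_z p" and e: "inflate_z p c = inflate_z p c'"
  obtain x y z where cx: "c = (x,y,z)" by (cases c) auto
  obtain x' y' z' where cx': "c' = (x',y',z')" by (cases c') auto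
  have m: "(x+y) mod 2 = p" "(x'+y') mod 2 = p" using c c' cx cx' by (auto simp: kappa_z_def)
  have e1: "(x-y-p) div 2 = (x'-y'-p) div 2" "(x+y-p) div 2 = (x'+y'-p) div 2" "z = z'"
    using e cx cx' by (auto simp: inflate_z_def)
  have "x - y - p = x' - y' - p" using evdiv(1)[OF m(1)] evdiv(1)[OF m(2)] e1(1) by linarith
  moreover have "x + y - p = x' + y' - p" using evdiv(2)[OF m(1)] evdiv(2)[OF m(2)] e1(2) by linarith
  ultimately show "c = c'" using cx cx' e1(3) by simp
qed

lemma infl_reg: assumes p: "p \<in> {0,1}"
  shows "inflate_z p ` (box_cubes N \<inter> kappa_z p) = RegN N p"
proof
  show "inflate_z p ` (box_cubes N \<inter> kappa_z p) \<subseteq> RegN N p"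
  proof
    fix c assume "c \<in> inflate_z p ` (box_cubes N \<inter> kappa_z p)"
    then obtain x y z where xyz: "(x,y,z) \<in> box_cubes N" "(x,y,z) \<in> kappa_z p" "c = inflate_z p (x,y,z)"
      by auto
    have m: "(x+y) mod 2 = p" using xyz by (auto simp: kappa_z_def)
    have "(x-y-p) div 2 + (x+y-p) div 2 + p = x" "(x+y-p) div 2 - (x-y-p) div 2 = y"
      using evdiv[OF m] by linarith+
    then show "c \<in> RegN N p" using xyz by (auto simp: RegN_def inflate_z_def box_cubes_def)
  qed
  show "RegN N p \<subseteq> inflate_z p ` (box_cubes N \<inter> kappa_z p)"
  proof
    fix c assume c: "c \<in> RegN N p"
    obtain u v w where cx: "c = (u,v,w)" by (cases c) auto
    have e: "inflate_z p (u+v+p, v-u, w) = (u,v,w)" unfolding inflate_z_def by simp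
    have m: "(u+v+p, v-u, w) \<in> box_cubes N \<inter> kappa_z p"
    proof -
      have "(u+v+p + (v-u)) mod 2 = p" using p by auto
      then show ?thesis using c cx by (auto simp: box_cubes_def kappa_z_def RegN_def)
    qed
    show "c \<in> inflate_z p ` (box_cubes N \<inter> kappa_z p)"
      using e m cx by (metis rev_image_eqI)
  qed
qed

lemma transform_props:
  assumes T: "slab_tiling (box_cubes N) T" and p: "p \<in> {0,1}"
  shows "\<forall>d\<in>transform a p T. isdom d"
    and "\<forall>d1\<in>transform a p T. \<forall>d2\<in>transform a p T. d1 \<noteq> d2 \<longrightarrow> d1 \<inter> d2 = {}"
    and "\<Union>(transform a p T) = RegN N p"
proof -
  let ?F = "\<lambda>s. inflate_z p ` (axis_perm a ` s \<inter> kappa_z p)"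
  have tr: "transform a p T = ?F ` T" unfolding transform_def by simp
  show "\<forall>d\<in>transform a p T. isdom d"
  proof
    fix d assume "d \<in> transform a p T"
    then obtain s where s: "s \<in> T" "d = ?F s" using tr by auto
    have "is_slab s" using T s unfolding slab_tiling_def by blast
    then show "isdom d" using s shape[OF perm_slab p] by simp
  qed
  show "\<forall>d1\<in>transform a p T. \<forall>d2\<in>transform a p T. d1 \<noteq> d2 \<longrightarrow> d1 \<inter> d2 = {}"
  proof (intro ballI impI)
    fix d1 d2 assume d1: "d1 \<in> transform a p T" and d2: "d2 \<in> transform a p T" and ne: "d1 \<noteq> d2"
    obtain s1 where s1: "s1 \<in> T" "d1 = ?F s1" using d1 tr by auto
    obtain s2 where s2: "s2 \<in> T" "d2 = ?F s2" using d2 tr by auto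
    have "s1 \<noteq> s2" using ne s1 s2 by auto
    then have "s1 \<inter> s2 = {}" using T s1 s2 unfolding slab_tiling_def by blast
    then have e: "axis_perm a ` s1 \<inter> axis_perm a ` s2 = {}" using inj_perm[of a]
      by (simp add: image_Int[symmetric])
    have "?F s1 \<inter> ?F s2 = inflate_z p ` ((axis_perm a ` s1 \<inter> kappa_z p) \<inter> (axis_perm a ` s2 \<inter> kappa_z p))"
      by (rule inj_on_image_Int[symmetric, OF inj_infl]) auto
    also have "\<dots> = {}" using e by auto
    finally show "d1 \<inter> d2 = {}" using s1 s2 by simp
  qed
  have "\<Union>(?F ` T) = inflate_z p ` (\<Union>s\<in>T. axis_perm a ` s \<inter> kappa_z p)"
    by (subst image_UN) (rule refl)
  also have "(\<Union>s\<in>T. axis_perm a ` s \<inter> kappa_z p) = axis_perm a ` (\<Union>T) \<inter> kappa_z p"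
    by auto
  finally have "\<Union>(?F ` T) = inflate_z p ` (axis_perm a ` (\<Union>T) \<inter> kappa_z p)" .
  also have "\<dots> = RegN N p" using T perm_box infl_reg[OF p] unfolding slab_tiling_def by simp
  finally show "\<Union>(transform a p T) = RegN N p" using tr by simp
qed



definition near :: "cube \<Rightarrow> cube \<Rightarrow> bool" where
  "near a b = (case a of (x,y,z) \<Rightarrow> case b of (x',y',z') \<Rightarrow> (y' = y \<or> y' = y + 1) \<and> (z' = z \<or> z' = z - 1))"

lemma finite_RegN: "p \<in> {0,1} \<Longrightarrow> finite (RegN N p)"
proof -
  assume p: "p \<in> {0,1}"
  have "RegN N p \<subseteq> {-N-2..N+2} \<times> {-N-2..N+2} \<times> {0..N}"
    using p unfolding RegN_def by auto
  then show ?thesis by (rule finite_subset) auto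
qed

lemma dom_facts:
  "ydom a \<noteq> vdom b" "xdom a \<noteq> ydom b" "xdom a \<noteq> vdom b"
  "inj ydom" "inj vdom" "inj xdom"
  "card (ydom a) = 2" "card (vdom a) = 2" "card (xdom a) = 2"
  unfolding ydom_def vdom_def xdom_def inj_def
  by (auto split: prod.splits simp: doubleton_eq_iff)

lemma effect_pm: "near a b \<Longrightarrow> effect a b = 1 \<or> effect a b = -1"
proof -
  assume "near a b"
  have "\<bar>effect a b\<bar> = 1" using \<open>near a b\<close>
    unfolding effect_def near_def by (auto split: prod.splits simp: abs_mult)
  then show ?thesis by linarith
qed

lemma effect_0: "\<not> near a b \<Longrightarrow> effect a b = 0"
  unfolding effect_def near_def by (auto split: prod.splits)

lemma sign_sum:
  fixes g :: "'a \<Rightarrow> real"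
  assumes "finite A" "\<forall>x\<in>A. g x = 1 \<or> g x = -1"
  shows "\<exists>k::int. sum g A = of_int k \<and> even (k + int (card A)) \<and> \<bar>k\<bar> \<le> int (card A)"
  using assms
proof (induction A rule: finite_induct)
  case empty then show ?case by simp
next
  case (insert x F)
  then obtain k where k: "sum g F = of_int k" "even (k + int (card F))" "\<bar>k\<bar> \<le> int (card F)" by auto
  have gx: "g x = 1 \<or> g x = -1" using insert by auto
  then show ?case
  proof
    assume "g x = 1"
    then show ?thesis using insert k by (intro exI[of _ "k+1"]) auto
  next
    assume "g x = -1"
    then show ?thesis using insert k by (intro exI[of _ "k-1"]) auto
  qed
qed

lemma twist_eq: "twist D = (1/4) * (\<Sum>(a,b) \<in> {(a,b). ydom a \<in> D \<and> vdom b \<in> D}. effect a b)"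
proof -
  have "{(a,b). (case a of (x,y,z) \<Rightarrow> {(x,y,z),(x,y+1,z)} \<in> D) \<and>
                (case b of (x,y,z) \<Rightarrow> {(x,y,z),(x,y,z+1)} \<in> D)} = {(a,b). ydom a \<in> D \<and> vdom b \<in> D}"
    unfolding ydom_def vdom_def by (auto split: prod.splits)
  then show ?thesis unfolding twist_def by simp
qed




lemma card_box: "N \<ge> 0 \<Longrightarrow> card (box_cubes N) = nat N ^ 3"
  unfolding box_cubes_def by (simp add: card_cartesian_product power3_eq_cube)

lemma card_RegN:
  assumes N: "even N" "N \<ge> 0" and p: "p \<in> {0,1}"
  shows "2 * card (RegN N p) \<le> nat N ^ 3"
proof -
  define B where "B = box_cubes N"
  define K where "K = {c. c \<in> B \<and> (fst c + fst (snd c)) mod 2 = p}"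
  define g where "g = (\<lambda>(u,v,w). (u+v+p, v-u, w::int))"
  define fl :: "cube \<Rightarrow> cube" where "fl = (\<lambda>(x,y,z). (if even x then x+1 else x-1, y, z))"
  have finB: "finite B" unfolding B_def box_cubes_def by simp
  have "inj g" unfolding g_def inj_def by auto
  moreover have "g ` RegN N p \<subseteq> K"
  proof
    fix c assume "c \<in> g ` RegN N p"
    then obtain u v w where uvw: "(u,v,w) \<in> RegN N p" "c = (u+v+p, v-u, w)"
      unfolding g_def by auto
    have "(u+v+p + (v-u)) mod 2 = p" using p by auto
    then show "c \<in> K" using uvw unfolding K_def B_def box_cubes_def RegN_def by auto
  qed
  moreover have "finite K" using finB unfolding K_def by simp
  ultimately have c1: "card (RegN N p) \<le> card K"
  proof -
    assume a: "inj g" "g ` RegN N p \<subseteq> K" "finite K"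
    have "card (RegN N p) = card (g ` RegN N p)" by (rule card_image[symmetric, OF inj_on_subset[OF a(1) subset_UNIV]])
    also have "\<dots> \<le> card K" by (rule card_mono[OF a(3) a(2)])
    finally show ?thesis .
  qed
  have ff0: "(if even (if even x then x + 1 else x - 1) then (if even x then x + 1 else x - 1) + 1 else (if even x then x + 1 else x - 1) - 1) = (x::int)" for x
    by (cases "even x") (simp_all add: even_add)
  have ff: "fl (fl c) = c" for c
  proof -
    obtain x y z where "c = (x,y,z)" by (cases c) auto
    then show ?thesis unfolding fl_def using ff0[of x] by (simp only: prod.case)
  qed
  have "inj fl" unfolding inj_def by (metis ff)
  moreover have "fl ` K \<subseteq> B - K"
  proof
    fix c assume "c \<in> fl ` K"
    then obtain x y z where xyz: "(x,y,z) \<in> K" "c = fl (x,y,z)" by auto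
    have b: "0 \<le> x" "x < N" "0 \<le> y" "y < N" "0 \<le> z" "z < N" "(x+y) mod 2 = p"
      using xyz unfolding K_def B_def box_cubes_def by auto
    show "c \<in> B - K"
    proof (cases "even x")
      case True
      have "x + 1 < N" using b(2) True N(1) by presburger
      moreover have "(x+1+y) mod 2 \<noteq> p" using b(7) by presburger
      ultimately show ?thesis using xyz b True unfolding fl_def K_def B_def box_cubes_def by auto
    next
      case False
      have "0 \<le> x - 1" using b(1) False by presburger
      moreover have "(x-1+y) mod 2 \<noteq> p" using b(7) by presburger
      ultimately show ?thesis using xyz b False unfolding fl_def K_def B_def box_cubes_def by auto
    qed
  qed
  moreover have "finite (B - K)" using finB by simp
  ultimately have c2: "card K \<le> card (B - K)"
  proof -
    assume a: "inj fl" "fl ` K \<subseteq> B - K" "finite (B - K)"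
    have "card K = card (fl ` K)" by (rule card_image[symmetric, OF inj_on_subset[OF a(1) subset_UNIV]])
    also have "\<dots> \<le> card (B - K)" by (rule card_mono[OF a(3) a(2)])
    finally show ?thesis .
  qed
  have KB: "K \<subseteq> B" unfolding K_def by auto
  have "card (B - K) = card B - card K" by (rule card_Diff_subset[OF finite_subset[OF KB finB] KB])
  moreover have "card K \<le> card B" by (rule card_mono[OF finB KB])
  ultimately have "card K + card (B - K) = card B" by linarith
  then show ?thesis using c1 c2 card_box[OF N(2)] unfolding B_def by linarith
qed

context
  fixes D :: "cube set set" and N p :: int
  assumes shp: "\<forall>d\<in>D. isdom d"
    and dsj: "\<forall>d1\<in>D. \<forall>d2\<in>D. d1 \<noteq> d2 \<longrightarrow> d1 \<inter> d2 = {}"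
    and cov: "\<Union>D = RegN N p"
    and pp: "p \<in> {0,1}"
begin

lemma subR: "d \<in> D \<Longrightarrow> d \<subseteq> RegN N p" using cov by blast

lemma finD: "finite D"
proof -
  have "D \<subseteq> Pow (RegN N p)" using subR by blast
  then show ?thesis using finite_RegN[OF pp] by (meson finite_Pow_iff finite_subset)
qed

lemma share: "d1 \<in> D \<Longrightarrow> d2 \<in> D \<Longrightarrow> c \<in> d1 \<Longrightarrow> c \<in> d2 \<Longrightarrow> d1 = d2"
  using dsj by blast

definition "PP = {(a,b). ydom a \<in> D \<and> vdom b \<in> D}"
definition "QQ = {(a,b). ydom a \<in> D \<and> vdom b \<in> D \<and> near a b}"
definition "HH = \<Union>{d\<in>D. \<exists>c. d = ydom c}"
definition "VV = \<Union>{d\<in>D. \<exists>c. d = vdom c}"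
definition "XX = \<Union>{d\<in>D. \<exists>c. d = xdom c}"
definition "WW = {(c1,c2). c1 \<in> HH \<and> c2 \<in> VV \<and> snd c1 = snd c2}"

lemma finPP: "finite PP"
proof -
  have "PP \<subseteq> (ydom -` D) \<times> (vdom -` D)" unfolding PP_def by auto
  moreover have "finite (ydom -` D)" "finite (vdom -` D)"
    using finD dom_facts(4,5) by (auto intro: finite_vimageI)
  ultimately show ?thesis by (meson finite_SigmaI finite_subset)
qed

lemma finQQ: "finite QQ"
  using finPP unfolding PP_def QQ_def by (rule finite_subset[rotated]) auto

lemma sumQ: "(\<Sum>(a,b)\<in>PP. effect a b) = (\<Sum>(a,b)\<in>QQ. effect a b)"
proof (rule sum.mono_neutral_right[OF finPP])
  show "QQ \<subseteq> PP" unfolding PP_def QQ_def by auto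
  show "\<forall>i\<in>PP - QQ. (case i of (a, b) \<Rightarrow> effect a b) = 0"
    unfolding PP_def QQ_def using effect_0 by (clarsimp, metis)
qed

lemma HH_iff: "c \<in> HH \<longleftrightarrow> (\<exists>a. ydom a \<in> D \<and> c \<in> ydom a)"
  unfolding HH_def by blast
lemma VV_iff: "c \<in> VV \<longleftrightarrow> (\<exists>a. vdom a \<in> D \<and> c \<in> vdom a)"
  unfolding VV_def by blast
lemma XX_iff: "c \<in> XX \<longleftrightarrow> (\<exists>a. xdom a \<in> D \<and> c \<in> xdom a)"
  unfolding XX_def by blast

definition phi :: "cube \<times> cube \<Rightarrow> cube \<times> cube" where
  "phi q = (case q of ((x,y,z),(x',y',z')) \<Rightarrow> ((x,y',z),(x',y',z)))"

lemma cardQW: "card QQ = card WW"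
proof (rule bij_betw_same_card[of phi])
  show "bij_betw phi QQ WW"
  proof (rule bij_betw_imageI)
    show "inj_on phi QQ"
    proof (rule inj_onI)
      fix q1 q2 assume q1: "q1 \<in> QQ" and q2: "q2 \<in> QQ" and e: "phi q1 = phi q2"
      obtain x1 y1 z1 x1' y1' z1' where q1x: "q1 = ((x1,y1,z1),(x1',y1',z1'))" by (cases q1) auto
      obtain x2 y2 z2 x2' y2' z2' where q2x: "q2 = ((x2,y2,z2),(x2',y2',z2'))" by (cases q2) auto
      have e2: "x1 = x2" "y1' = y2'" "z1 = z2" "x1' = x2'" using e q1x q2x by (auto simp: phi_def)
      have m1: "ydom (x1,y1,z1) \<in> D" "vdom (x1',y1',z1') \<in> D" "near (x1,y1,z1) (x1',y1',z1')"
        using q1 q1x unfolding QQ_def by auto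
      have m2: "ydom (x2,y2,z2) \<in> D" "vdom (x2',y2',z2') \<in> D" "near (x2,y2,z2) (x2',y2',z2')"
        using q2 q2x unfolding QQ_def by auto
      have c1: "(x1,y1',z1) \<in> ydom (x1,y1,z1)" "(x2,y2',z2) \<in> ydom (x2,y2,z2)"
        using m1(3) m2(3) by (auto simp: near_def ydom_def)
      have "ydom (x1,y1,z1) = ydom (x2,y2,z2)"
        using share[OF m1(1) m2(1) c1(1)] c1(2) e2 by simp
      then have a: "(x1,y1,z1) = (x2,y2,z2)" using dom_facts(4) by (meson injD)
      have c2: "(x1',y1',z1) \<in> vdom (x1',y1',z1')" "(x2',y2',z2) \<in> vdom (x2',y2',z2')"
        using m1(3) m2(3) by (auto simp: near_def vdom_def)
      have "vdom (x1',y1',z1') = vdom (x2',y2',z2')"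
        using share[OF m1(2) m2(2) c2(1)] c2(2) e2 by simp
      then have b: "(x1',y1',z1') = (x2',y2',z2')" using dom_facts(5) by (meson injD)
      show "q1 = q2" using a b q1x q2x by simp
    qed
    show "phi ` QQ = WW"
    proof
      show "phi ` QQ \<subseteq> WW"
      proof
        fix w assume "w \<in> phi ` QQ"
        then obtain q where q: "q \<in> QQ" "w = phi q" by auto
        obtain x y z x' y' z' where qx: "q = ((x,y,z),(x',y',z'))" by (cases q) auto
        have m: "ydom (x,y,z) \<in> D" "vdom (x',y',z') \<in> D" "near (x,y,z) (x',y',z')"
          using q qx unfolding QQ_def by auto
        have "(x,y',z) \<in> ydom (x,y,z)" "(x',y',z) \<in> vdom (x',y',z')"
          using m(3) by (auto simp: near_def ydom_def vdom_def)
        then show "w \<in> WW" using m q qx unfolding WW_def HH_iff VV_iff phi_def by auto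
      qed
      show "WW \<subseteq> phi ` QQ"
      proof
        fix w assume w: "w \<in> WW"
        obtain c1 c2 where wx: "w = (c1,c2)" by (cases w) auto
        have h: "c1 \<in> HH" "c2 \<in> VV" "snd c1 = snd c2" using w wx unfolding WW_def by auto
        obtain a where a: "ydom a \<in> D" "c1 \<in> ydom a" using h(1) HH_iff by auto
        obtain b where b: "vdom b \<in> D" "c2 \<in> vdom b" using h(2) VV_iff by auto
        obtain x y z where ax: "a = (x,y,z)" by (cases a) auto
        obtain x' y' z' where bx: "b = (x',y',z')" by (cases b) auto
        have c1x: "c1 = (x,y,z) \<or> c1 = (x,y+1,z)" using a(2) ax by (auto simp: ydom_def)
        have c2x: "c2 = (x',y',z') \<or> c2 = (x',y',z'+1)" using b(2) bx by (auto simp: vdom_def)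
        have nr: "near a b" using c1x c2x h(3) ax bx by (auto simp: near_def)
        have "phi (a,b) = w" using c1x c2x h(3) ax bx wx by (auto simp: phi_def)
        moreover have "(a,b) \<in> QQ" using a b nr unfolding QQ_def by auto
        ultimately show "w \<in> phi ` QQ" by blast
      qed
    qed
  qed
qed


lemma HH_sub: "HH \<subseteq> RegN N p" using subR unfolding HH_def by blast
lemma VV_sub: "VV \<subseteq> RegN N p" using subR unfolding VV_def by blast
lemma XX_sub: "XX \<subseteq> RegN N p" using subR unfolding XX_def by blast

lemma R_cover: "RegN N p = HH \<union> VV \<union> XX"
proof
  show "RegN N p \<subseteq> HH \<union> VV \<union> XX"
  proof
    fix c assume "c \<in> RegN N p"
    then obtain d where d: "d \<in> D" "c \<in> d" using cov by blast
    then obtain e where "d = xdom e \<or> d = ydom e \<or> d = vdom e" using shp unfolding isdom_def by blast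
    then show "c \<in> HH \<union> VV \<union> XX" using d HH_iff VV_iff XX_iff by blast
  qed
  show "HH \<union> VV \<union> XX \<subseteq> RegN N p" using HH_sub VV_sub XX_sub by blast
qed

lemma HV_disj: "HH \<inter> VV = {}"
proof -
  { fix c assume "c \<in> HH" "c \<in> VV"
    then obtain a b where "ydom a \<in> D" "c \<in> ydom a" "vdom b \<in> D" "c \<in> vdom b"
      unfolding HH_iff VV_iff by blast
    then have False using share dom_facts(1) by metis }
  then show ?thesis by blast
qed
lemma HX_disj: "HH \<inter> XX = {}"
proof -
  { fix c assume "c \<in> HH" "c \<in> XX"
    then obtain a b where "ydom a \<in> D" "c \<in> ydom a" "xdom b \<in> D" "c \<in> xdom b"
      unfolding HH_iff XX_iff by blast
    then have False using share dom_facts(2) by metis }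
  then show ?thesis by blast
qed
lemma VX_disj: "VV \<inter> XX = {}"
proof -
  { fix c assume "c \<in> VV" "c \<in> XX"
    then obtain a b where "vdom a \<in> D" "c \<in> vdom a" "xdom b \<in> D" "c \<in> xdom b"
      unfolding VV_iff XX_iff by blast
    then have False using share dom_facts(3) by metis }
  then show ?thesis by blast
qed

definition "RR r = {c. c \<in> RegN N p \<and> snd c = r}"
definition "Hr r = {c. c \<in> HH \<and> snd c = r}"
definition "Vr r = {c. c \<in> VV \<and> snd c = r}"
definition "Xr r = {c. c \<in> XX \<and> snd c = r}"

lemma finR: "finite (RegN N p)" using finite_RegN[OF pp] .
lemma finHH: "finite HH" using HH_sub finR finite_subset by blast
lemma finVV: "finite VV" using VV_sub finR finite_subset by blast
lemma finXX: "finite XX" using XX_sub finR finite_subset by blast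

lemma row_card: "card (Hr r) + card (Vr r) + card (Xr r) = card (RR r)"
proof -
  have e: "RR r = Hr r \<union> Vr r \<union> Xr r" using R_cover unfolding RR_def Hr_def Vr_def Xr_def by blast
  have f: "finite (Hr r)" "finite (Vr r)" "finite (Xr r)"
    using finHH finVV finXX unfolding Hr_def Vr_def Xr_def by auto
  have "card (Hr r \<union> Vr r \<union> Xr r) = card (Hr r \<union> Vr r) + card (Xr r)"
    by (rule card_Un_disjoint) (use f HX_disj VX_disj in \<open>auto simp: Hr_def Vr_def Xr_def\<close>)
  also have "card (Hr r \<union> Vr r) = card (Hr r) + card (Vr r)"
    by (rule card_Un_disjoint) (use f HV_disj in \<open>auto simp: Hr_def Vr_def\<close>)
  finally show ?thesis using e by simp
qed

lemma pairwise_D: "pairwise disjnt D" using dsj unfolding pairwise_def disjnt_def by blast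

lemma Xr_even: "even (card (Xr r))"
proof -
  let ?C = "{d\<in>D. \<exists>c. d = xdom c \<and> snd c = r}"
  have e: "Xr r = \<Union>?C"
  proof
    show "Xr r \<subseteq> \<Union>?C"
    proof
      fix c assume "c \<in> Xr r"
      then obtain b where b: "xdom b \<in> D" "c \<in> xdom b" "snd c = r" unfolding Xr_def XX_iff by blast
      have "snd b = r" using b by (cases b) (auto simp: xdom_def)
      then show "c \<in> \<Union>?C" using b by blast
    qed
    show "\<Union>?C \<subseteq> Xr r" unfolding Xr_def XX_iff by (auto simp: xdom_def split: prod.splits)
  qed
  have "card (\<Union>?C) = sum card ?C"
    by (rule card_Union_disjoint) (use pairwise_D in \<open>auto simp: pairwise_def xdom_def\<close>)
  also have "\<dots> = sum (\<lambda>_. 2) ?C" by (rule sum.cong) (auto simp: dom_facts)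
  finally show ?thesis using e by simp
qed

lemma HH_even: "even (card HH)"
proof -
  let ?C = "{d\<in>D. \<exists>c. d = ydom c}"
  have "card (\<Union>?C) = sum card ?C"
    by (rule card_Union_disjoint) (use pairwise_D in \<open>auto simp: pairwise_def ydom_def\<close>)
  also have "\<dots> = sum (\<lambda>_. 2) ?C" by (rule sum.cong) (auto simp: dom_facts)
  finally show ?thesis unfolding HH_def by simp
qed

lemma RR_card: "card (RR (v,w)) \<le> nat N \<and> (p = 0 \<longrightarrow> card (RR (v,w)) = 0 \<or> odd (card (RR (v,w))))
   \<and> (p = 1 \<longrightarrow> even (card (RR (v,w))))"
proof (cases "0 \<le> w \<and> w < N")
  case False
  then have "RR (v,w) = {}" unfolding RR_def RegN_def by auto
  then have c0: "card (RR (v,w)) = 0" by simp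
  show ?thesis unfolding c0 by simp
next
  case True
  define hi where "hi = min (N-1-v-p) v"
  have "RR (v,w) = (\<lambda>u. (u,v,w)) ` {-hi-p..hi}"
  proof
    show "RR (v,w) \<subseteq> (\<lambda>u. (u,v,w)) ` {-hi-p..hi}"
    proof
      fix c assume "c \<in> RR (v,w)"
      then obtain u where "c = (u,v,w)" "0 \<le> u+v+p" "u+v+p < N" "0 \<le> v-u" "v-u < N"
        unfolding RR_def RegN_def by auto
      then show "c \<in> (\<lambda>u. (u,v,w)) ` {-hi-p..hi}" unfolding hi_def by auto
    qed
    show "(\<lambda>u. (u,v,w)) ` {-hi-p..hi} \<subseteq> RR (v,w)"
      using True unfolding RR_def RegN_def hi_def by auto
  qed
  moreover have "inj (\<lambda>u::int. (u,v,w))" by (auto simp: inj_def)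
  ultimately have "card (RR (v,w)) = card {-hi-p..hi}" by (simp add: card_image inj_on_def)
  also have "\<dots> = nat (2*hi + p + 1)" by simp
  finally have c: "card (RR (v,w)) = nat (2*hi + p + 1)" .
  have "hi \<le> N-1-v-p" "hi \<le> v" unfolding hi_def by auto
  then have b: "2*hi + p + 1 \<le> N" by linarith
  show ?thesis unfolding c
  proof (intro conjI impI)
    show "nat (2*hi + p + 1) \<le> nat N" using b by simp
  next
    assume "p = 0"
    then show "nat (2*hi + p + 1) = 0 \<or> odd (nat (2*hi + p + 1))"
      by (cases "2*hi + 1 \<le> 0") (auto simp: even_nat_iff)
  next
    assume "p = 1"
    then show "even (nat (2*hi + p + 1))" by (cases "2*hi + 2 \<le> 0") (auto simp: even_nat_iff)
  qed
qed


lemma par0: "(a::nat)+b+c = d \<Longrightarrow> even c \<Longrightarrow> d = 0 \<or> odd d \<Longrightarrow> even (a*b)"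
proof -
  assume h: "a+b+c = d" "even c" "d = 0 \<or> odd d"
  have "even a \<or> even b" using h by presburger
  then show ?thesis by auto
qed

definition "RF = snd ` RegN N p"

lemma finRF: "finite RF" unfolding RF_def using finR by simp

lemma sumH: "(\<Sum>r\<in>RF. card (Hr r)) = card HH"
proof -
  have "(\<Sum>r\<in>RF. card (Hr r)) = (\<Sum>r\<in>RF. \<Sum>x\<in>{x. x\<in>HH \<and> snd x = r}. (1::nat))"
    by (simp add: Hr_def)
  also have "\<dots> = (\<Sum>x\<in>HH. 1)"
    by (rule sum.group[OF finHH finRF]) (use HH_sub in \<open>auto simp: RF_def\<close>)
  finally show ?thesis by simp
qed

lemma sumV: "(\<Sum>r\<in>RF. card (Vr r)) = card VV"
proof -
  have "(\<Sum>r\<in>RF. card (Vr r)) = (\<Sum>r\<in>RF. \<Sum>x\<in>{x. x\<in>VV \<and> snd x = r}. (1::nat))"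
    by (simp add: Vr_def)
  also have "\<dots> = (\<Sum>x\<in>VV. 1)"
    by (rule sum.group[OF finVV finRF]) (use VV_sub in \<open>auto simp: RF_def\<close>)
  finally show ?thesis by simp
qed

lemma cardWW: "card WW = (\<Sum>r\<in>RF. card (Hr r) * card (Vr r))"
proof -
  have e: "WW = (\<Union>r\<in>RF. Hr r \<times> Vr r)"
    using HH_sub unfolding WW_def Hr_def Vr_def RF_def by force
  have "card (\<Union>r\<in>RF. Hr r \<times> Vr r) = (\<Sum>r\<in>RF. card (Hr r \<times> Vr r))"
    by (rule card_UN_disjoint[OF finRF]) (use finHH finVV in \<open>auto simp: Hr_def Vr_def\<close>)
  then show ?thesis using e by (simp add: card_cartesian_product)
qed

lemma HV_le: "card HH + card VV \<le> card (RegN N p)"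
proof -
  have "card HH + card VV = card (HH \<union> VV)"
    by (rule card_Un_disjoint[symmetric]) (use finHH finVV HV_disj in auto)
  also have "\<dots> \<le> card (RegN N p)" by (rule card_mono[OF finR]) (use HH_sub VV_sub in auto)
  finally show ?thesis .
qed

lemma rowfacts: "card (Hr r) + card (Vr r) \<le> nat N \<and>
   (p = 0 \<longrightarrow> even (card (Hr r) * card (Vr r))) \<and>
   (p = 1 \<longrightarrow> even (card (Hr r) * card (Vr r) + card (Hr r)))"
proof -
  obtain v w where r: "r = (v,w)" by (cases r) auto
  have rc: "card (Hr r) + card (Vr r) + card (Xr r) = card (RR r)" by (rule row_card)
  have xe: "even (card (Xr r))" by (rule Xr_even)
  have L: "card (RR r) \<le> nat N \<and> (p = 0 \<longrightarrow> card (RR r) = 0 \<or> odd (card (RR r)))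
   \<and> (p = 1 \<longrightarrow> even (card (RR r)))" using RR_card r by simp
  show ?thesis
  proof (intro conjI impI)
    show "card (Hr r) + card (Vr r) \<le> nat N" using rc L by linarith
  next
    assume "p = 0"
    then have "card (RR r) = 0 \<or> odd (card (RR r))" using conjunct1[OF conjunct2[OF L]] by (rule mp[rotated])
    then show "even (card (Hr r) * card (Vr r))" using rc xe par0 by blast
  next
    assume "p = 1"
    then have "even (card (RR r))" using conjunct2[OF conjunct2[OF L]] by (rule mp[rotated])
    then have "even (card (Hr r) + card (Vr r))" using rc xe by presburger
    then have "even (card (Hr r) * (card (Vr r) + 1))" by auto
    then show "even (card (Hr r) * card (Vr r) + card (Hr r))" by (simp add: algebra_simps)
  qed
qed


lemma N2: "N = 2 \<Longrightarrow> QQ = {}"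
proof (rule ccontr)
  assume N: "N = 2" and ne: "QQ \<noteq> {}"
  then obtain x y z x' y' z' where q: "((x,y,z),(x',y',z')) \<in> QQ" by auto
  have m: "ydom (x,y,z) \<in> D" "vdom (x',y',z') \<in> D" "near (x,y,z) (x',y',z')"
    using q unfolding QQ_def by auto
  have r: "(x,y,z) \<in> RegN N p" "(x,y+1,z) \<in> RegN N p" "(x',y',z') \<in> RegN N p"
    using subR[OF m(1)] subR[OF m(2)] by (auto simp: ydom_def vdom_def)
  show False
  proof (cases "p = 0")
    case True
    have "x = 0" "x' = 0" using r N True unfolding RegN_def by auto
    then have "(x,y',z) \<in> ydom (x,y,z)" "(x,y',z) \<in> vdom (x',y',z')"
      using m(3) by (auto simp: near_def ydom_def vdom_def)
    then show False using share[OF m(1) m(2)] dom_facts(1) by metis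
  next
    case False
    then have "p = 1" using pp by auto
    then have "x + y = -1" "y = x" using r N unfolding RegN_def by auto
    then show False by presburger
  qed
qed

lemma core:
  assumes N: "even N" "N \<ge> 2"
  shows "\<exists>k::int. (\<Sum>(a,b)\<in>{(a,b). ydom a \<in> D \<and> vdom b \<in> D}. effect a b) = of_int k \<and> even k \<and> 8*\<bar>k\<bar> \<le> N^4 \<and> (N = 2 \<longrightarrow> k = 0)"
proof -
  define n where "n = nat N"
  have ev: "even (card WW)"
  proof (cases "p = 0")
    case True
    have "\<forall>r\<in>RF. even (card (Hr r) * card (Vr r))" using rowfacts True by blast
    then show ?thesis unfolding cardWW by (simp add: dvd_sum)
  next
    case False
    then have p1: "p = 1" using pp by auto
    have "\<forall>r\<in>RF. even (card (Hr r) * card (Vr r) + card (Hr r))" using rowfacts p1 by blast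
    then have "even (\<Sum>r\<in>RF. card (Hr r) * card (Vr r) + card (Hr r))" by (simp add: dvd_sum)
    then have "even ((\<Sum>r\<in>RF. card (Hr r) * card (Vr r)) + card HH)"
      by (simp add: sum.distrib sumH)
    then show ?thesis unfolding cardWW using HH_even by auto
  qed
  have rowb: "4 * (card (Hr r) * card (Vr r)) \<le> n * (card (Hr r) + card (Vr r))" for r
  proof -
    define h where "h = card (Hr r)"
    define v where "v = card (Vr r)"
    have hv: "h + v \<le> n" using rowfacts unfolding h_def v_def n_def by blast
    have "0 \<le> (int h - int v)^2" by simp
    then have "4 * int h * int v \<le> (int h + int v) * (int h + int v)"
      by (simp add: power2_eq_square algebra_simps)
    then have "int (4 * h * v) \<le> int ((h + v) * (h + v))" by simp
    then have "4 * h * v \<le> (h + v) * (h + v)" by (simp only: of_nat_le_iff)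
    also have "\<dots> \<le> n * (h + v)" using hv by simp
    finally show ?thesis unfolding h_def v_def by simp
  qed
  have "4 * card WW = (\<Sum>r\<in>RF. 4 * (card (Hr r) * card (Vr r)))"
    unfolding cardWW by (simp add: sum_distrib_left)
  also have "\<dots> \<le> (\<Sum>r\<in>RF. n * (card (Hr r) + card (Vr r)))" by (rule sum_mono) (rule rowb)
  also have "\<dots> = n * (card HH + card VV)"
    by (simp add: sum_distrib_left[symmetric] sum.distrib sumH sumV)
  also have "\<dots> \<le> n * card (RegN N p)" using HV_le by simp
  finally have b1: "4 * card WW \<le> n * card (RegN N p)" .
  have "2 * card (RegN N p) \<le> n ^ 3" using card_RegN[of N p] N pp unfolding n_def by simp
  then have R2: "n * (2 * card (RegN N p)) \<le> n * n ^ 3" by (rule mult_le_mono2)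
  have "8 * card WW = 2 * (4 * card WW)" by simp
  also have "\<dots> \<le> 2 * (n * card (RegN N p))" using b1 by simp
  also have "\<dots> = n * (2 * card (RegN N p))" by simp
  also have "\<dots> \<le> n * n ^ 3" by (rule R2)
  also have "\<dots> = n ^ 4" by (simp add: eval_nat_numeral)
  finally have "8 * card QQ \<le> n ^ 4" using cardQW by simp
  then have "int (8 * card QQ) \<le> int (n ^ 4)" by (simp only: of_nat_le_iff)
  moreover have "int (n ^ 4) = N ^ 4" unfolding n_def using N by simp
  ultimately have b2: "8 * int (card QQ) \<le> N ^ 4" by simp
  have gq: "\<forall>x\<in>QQ. (case x of (a,b) \<Rightarrow> effect a b) = 1 \<or> (case x of (a,b) \<Rightarrow> effect a b) = -1"
    unfolding QQ_def using effect_pm by auto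
  obtain k where k: "(\<Sum>(a,b)\<in>QQ. effect a b) = of_int k" "even (k + int (card QQ))" "\<bar>k\<bar> \<le> int (card QQ)"
    using sign_sum[OF finQQ gq] by blast
  have "even (int (card QQ))" using ev cardQW by simp
  then have "even k" using k(2) by presburger
  moreover have "8 * \<bar>k\<bar> \<le> N^4" using k(3) b2 by linarith
  moreover have "N = 2 \<longrightarrow> k = 0" using N2 k(3) by auto
  moreover have "(\<Sum>(a,b)\<in>{(a,b). ydom a \<in> D \<and> vdom b \<in> D}. effect a b) = of_int k"
    using k(1) sumQ unfolding PP_def by simp
  ultimately show ?thesis by blast
qed

end


lemma tw_val:
  assumes T: "slab_tiling (box_cubes N) T" and p: "p \<in> {0,1}" and N: "even N" "N \<ge> 2"
  shows "\<exists>j::int. Tw_kappa a p T = of_int j / 2 \<and> 16*\<bar>j\<bar> \<le> N^4 \<and> (N = 2 \<longrightarrow> j = 0)"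
proof -
  let ?D = "transform a p T"
  note tp = transform_props[OF T p, of a]
  obtain k where k: "(\<Sum>(a,b)\<in>{(a,b). ydom a \<in> ?D \<and> vdom b \<in> ?D}. effect a b) = of_int k" "even k" "8*\<bar>k\<bar> \<le> N^4" "N = 2 \<longrightarrow> k = 0"
    using core[OF tp(1) tp(2) tp(3) p N] by blast
  obtain j where j: "k = 2*j" using k(2) by blast
  have "Tw_kappa a p T = (1/4) * of_int k"
    unfolding Tw_kappa_def twist_eq using k(1) by simp
  then have "Tw_kappa a p T = of_int j / 2" using j by simp
  moreover have "16*\<bar>j\<bar> \<le> N^4" using k(3) j by (simp add: abs_mult)
  moreover have "N = 2 \<longrightarrow> j = 0" using k(4) j by simp
  ultimately show ?thesis by blast
qed

lemma final_ineq:
  fixes t :: real and m :: int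
  assumes t: "t \<ge> 256" and m: "16 * real_of_int m \<le> t" and m0: "0 \<le> m"
  shows "(2 * real_of_int m + 1) ^ 3 \<le> (1 / 2^8) * t ^ 3"
proof -
  have "2 * real_of_int m + 1 \<le> 33 * t / 256" using t m by linarith
  moreover have "0 \<le> 2 * real_of_int m + 1" using m0 by simp
  ultimately have "(2 * real_of_int m + 1) ^ 3 \<le> (33 * t / 256) ^ 3" by (rule power_mono)
  also have "\<dots> = 35937 / 16777216 * t ^ 3" by (simp add: power_divide power_mult_distrib)
  also have "\<dots> \<le> (1 / 2^8) * t ^ 3" using t by (intro mult_right_mono) auto
  finally show ?thesis .
qed

theorem lemma5p3:
  fixes N px py pz :: int
  assumes "even N" and "N \<ge> 2"
    and "px \<in> {0,1}" and "py \<in> {0,1}" and "pz \<in> {0,1}"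
  shows "real (card (TTw_set px py pz (box_cubes N))) \<le> (1 / 2^8) * real_of_int N ^ 12"
proof -
  define m where "m = N^4 div 16"
  define Vals where "Vals = (\<lambda>j::int. (of_int j / 2 :: real)) ` {-m..m}"
  have jm: "16*\<bar>j\<bar> \<le> N^4 \<Longrightarrow> j \<in> {-m..m}" for j
    unfolding m_def by (simp add: abs_le_iff; linarith)
  have finV: "finite Vals" unfolding Vals_def by simp
  have cV: "card Vals \<le> nat (2*m+1)"
    unfolding Vals_def using card_image_le[of "{-m..m}" "\<lambda>j::int. (of_int j / 2 :: real)"] by simp
  have sub: "TTw_set px py pz (box_cubes N) \<subseteq> Vals \<times> Vals \<times> Vals"
  proof
    fix t assume "t \<in> TTw_set px py pz (box_cubes N)"
    then obtain T where T: "slab_tiling (box_cubes N) T" "t = TTw px py pz T" unfolding TTw_set_def by auto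
    obtain j0 where j0: "Tw_kappa 0 px T = of_int j0 / 2" "16*\<bar>j0\<bar> \<le> N^4"
      using tw_val[OF T(1) assms(3) assms(1,2)] by blast
    obtain j1 where j1: "Tw_kappa 1 py T = of_int j1 / 2" "16*\<bar>j1\<bar> \<le> N^4"
      using tw_val[OF T(1) assms(4) assms(1,2)] by blast
    obtain j2 where j2: "Tw_kappa 2 pz T = of_int j2 / 2" "16*\<bar>j2\<bar> \<le> N^4"
      using tw_val[OF T(1) assms(5) assms(1,2)] by blast
    show "t \<in> Vals \<times> Vals \<times> Vals"
      unfolding T(2) TTw_def Vals_def using j0 j1 j2 jm by auto
  qed
  show ?thesis
  proof (cases "N = 2")
    case True
    have s0: "TTw_set px py pz (box_cubes N) \<subseteq> {(0,0,0)}"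
    proof
      fix t assume "t \<in> TTw_set px py pz (box_cubes N)"
      then obtain T where T: "slab_tiling (box_cubes N) T" "t = TTw px py pz T" unfolding TTw_set_def by auto
      have "Tw_kappa 0 px T = 0" using tw_val[OF T(1) assms(3) assms(1,2)] True by auto
      moreover have "Tw_kappa 1 py T = 0" using tw_val[OF T(1) assms(4) assms(1,2)] True by auto
      moreover have "Tw_kappa 2 pz T = 0" using tw_val[OF T(1) assms(5) assms(1,2)] True by auto
      ultimately show "t \<in> {(0,0,0)}" unfolding T(2) TTw_def by simp
    qed
    have "card (TTw_set px py pz (box_cubes N)) \<le> 1"
      using card_mono[OF _ s0] by simp
    then show ?thesis using True by simp
  next
    case False
    then have N4: "N \<ge> 4" using assms(1,2) by presburger
    have "0 \<le> N^4" using assms(2) by simp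
    then have m0: "0 \<le> m" unfolding m_def by (simp add: pos_imp_zdiv_nonneg_iff)
    have m16: "16 * m \<le> N^4" unfolding m_def by simp
    have "card (TTw_set px py pz (box_cubes N)) \<le> card (Vals \<times> Vals \<times> Vals)"
      by (rule card_mono[OF _ sub]) (use finV in simp)
    also have "\<dots> = card Vals ^ 3" by (simp add: card_cartesian_product power3_eq_cube)
    also have "\<dots> \<le> nat (2*m+1) ^ 3" using cV by (simp add: power_mono)
    finally have c: "real (card (TTw_set px py pz (box_cubes N))) \<le> real (nat (2*m+1) ^ 3)"
      by (simp only: of_nat_le_iff)
    have r: "real (nat (2*m+1) ^ 3) = (2 * real_of_int m + 1) ^ 3" using m0 by simp
    have "(4::real)^4 \<le> real_of_int N ^ 4" using N4 by (intro power_mono) auto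
    then have t: "real_of_int N ^ 4 \<ge> 256" by simp
    have "16 * real_of_int m \<le> real_of_int N ^ 4" using m16 by (simp flip: of_int_power)
    from final_ineq[OF t this m0] have "(2 * real_of_int m + 1) ^ 3 \<le> (1 / 2^8) * (real_of_int N ^ 4) ^ 3" .
    moreover have "(real_of_int N ^ 4) ^ 3 = real_of_int N ^ 12" by (simp flip: power_mult)
    moreover have "real (card (TTw_set px py pz (box_cubes N))) \<le> (2 * real_of_int m + 1) ^ 3"
      using c r by linarith
    ultimately show ?thesis by simp
  qed
qed


end
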